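(* Let $G$ be a simple graph and let $s\geq 1$ be an integer such that $G$ contains no cycle of odd length at most $2s-3$. Then $I(G)^{(s+1)}\subseteq I(G)^s$.
   Context: $S=\mathbb{K}[x_1,\dots,x_n]$ over a field $\mathbb{K}$; vertices of $G$ are the variables. $I(G)$ is the edge ideal and $I(G)^{(s)}=\bigcap_{C\in\mathcal{C}(G)}\mathfrak{p}_C^s$, where $\mathcal{C}(G)$ is the set of minimal vertex covers of $G$ and $\mathfrak{p}_C$ is generated by the variables in $C$. For $s\le 2$ the hypothesis on odd cycles is vacuous. *)

theory Defs
  imports Main "HOL-Library.Poly_Mapping"
begin

(* Polynomial ring K[x_v : v in 'v]: monomials are exponent vectors 'v =>0 nat. *)

type_synonym ('v, 'k) mpoly = "('v \<Rightarrow>\<^sub>0 nat) \<Rightarrow>\<^sub>0 'k"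

definition var :: "'v \<Rightarrow> ('v, 'k::comm_ring_1) mpoly" where
  "var v = Poly_Mapping.single (Poly_Mapping.single v 1) 1"

definition is_ideal :: "'a::comm_ring_1 set \<Rightarrow> bool" where
  "is_ideal I \<longleftrightarrow> 0 \<in> I \<and> (\<forall>a\<in>I. \<forall>b\<in>I. a + b \<in> I) \<and> (\<forall>r. \<forall>a\<in>I. r * a \<in> I)"

definition ideal_gen :: "'a::comm_ring_1 set \<Rightarrow> 'a set" where
  "ideal_gen S = \<Inter>{I. is_ideal I \<and> S \<subseteq> I}"

definition ideal_pow :: "'a::comm_ring_1 set \<Rightarrow> nat \<Rightarrow> 'a set" where
  "ideal_pow I s = ideal_gen {prod_list xs | xs. length xs = s \<and> set xs \<subseteq> I}"

(* Simple graph on vertex set UNIV :: 'v set, given by its edge set. *)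
definition simple_graph :: "'v set set \<Rightarrow> bool" where
  "simple_graph E \<longleftrightarrow> (\<forall>e\<in>E. card e = 2)"

definition edge_ideal :: "'v set set \<Rightarrow> ('v, 'k::comm_ring_1) mpoly set" where
  "edge_ideal E = ideal_gen {var u * var v | u v. {u, v} \<in> E}"

definition vertex_cover :: "'v set set \<Rightarrow> 'v set \<Rightarrow> bool" where
  "vertex_cover E C \<longleftrightarrow> (\<forall>e\<in>E. e \<inter> C \<noteq> {})"

definition minimal_vertex_cover :: "'v set set \<Rightarrow> 'v set \<Rightarrow> bool" where
  "minimal_vertex_cover E C \<longleftrightarrow> vertex_cover E C \<and> (\<forall>D. D \<subset> C \<longrightarrow> \<not> vertex_cover E D)"

definition var_ideal :: "'v set \<Rightarrow> ('v, 'k::comm_ring_1) mpoly set" where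
  "var_ideal C = ideal_gen (var ` C)"

definition symbolic_power :: "'v set set \<Rightarrow> nat \<Rightarrow> ('v, 'k::comm_ring_1) mpoly set" where
  "symbolic_power E s = \<Inter>{ideal_pow (var_ideal C) s | C. minimal_vertex_cover E C}"

definition has_cycle_of_length :: "'v set set \<Rightarrow> nat \<Rightarrow> bool" where
  "has_cycle_of_length E k \<longleftrightarrow> k \<ge> 3 \<and>
     (\<exists>vs. length vs = k \<and> distinct vs \<and> (\<forall>i<k. {vs ! i, vs ! ((i + 1) mod k)} \<in> E))"

end

theory Submission
  imports Defs
begin


definition matching :: "'a set set \<Rightarrow> bool" where
  "matching M \<longleftrightarrow> (\<forall>e\<in>M. \<forall>f\<in>M. e \<noteq> f \<longrightarrow> e \<inter> f = {})"

definition nu :: "'a set set \<Rightarrow> nat" where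
  "nu F = Max (card ` {M. M \<subseteq> F \<and> matching M})"

definition graph :: "'a set set \<Rightarrow> bool" where
  "graph F \<longleftrightarrow> finite F \<and> (\<forall>e\<in>F. card e = 2)"

lemma nu_ge: "finite F \<Longrightarrow> M \<subseteq> F \<Longrightarrow> matching M \<Longrightarrow> card M \<le> nu F"
  unfolding nu_def by (rule Max_ge) auto

lemma nu_ex: "finite F \<Longrightarrow> \<exists>M. M \<subseteq> F \<and> matching M \<and> card M = nu F"
proof -
  assume "finite F"
  have "finite (card ` {M. M \<subseteq> F \<and> matching M})" using \<open>finite F\<close> by auto
  moreover have "{} \<in> {M. M \<subseteq> F \<and> matching M}" by (auto simp: matching_def)
  ultimately have "nu F \<in> card ` {M. M \<subseteq> F \<and> matching M}"
    unfolding nu_def by (intro Max_in) auto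
  then show ?thesis by auto
qed

lemma matching_insert: "matching M \<Longrightarrow> (\<forall>f\<in>M. e \<inter> f = {}) \<Longrightarrow> matching (insert e M)"
  unfolding matching_def by blast

lemma card2_obtain: "card e = 2 \<Longrightarrow> a \<in> e \<Longrightarrow> \<exists>w. w \<noteq> a \<and> e = {a, w}"
  by (metis card_2_iff insert_commute insert_iff singletonD)

lemma lemL:
  assumes "graph F" "M1 \<subseteq> F" "matching M1" "card M1 = nu F"
    "M2 \<subseteq> F" "matching M2" "card M2 = nu F"
    "\<forall>e\<in>M1. a \<notin> e" "\<forall>e\<in>M2. b \<notin> e"
    "\<forall>N. N \<subseteq> F \<longrightarrow> matching N \<longrightarrow> card N = nu F \<longrightarrow> (\<exists>e\<in>N. a \<in> e \<or> b \<in> e)"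
  shows "\<exists>P. distinct P \<and> P \<noteq> [] \<and> hd P = a \<and> last P = b \<and> odd (length P) \<and> length P \<le> 2 * nu F + 1
          \<and> (\<forall>i. i + 1 < length P \<longrightarrow> {P!i, P!(i+1)} \<in> F)"
  using assms
proof (induction "card M1" arbitrary: F M1 M2 a b rule: less_induct)
  case less
  have finF: "finite F" and c2: "\<forall>e\<in>F. card e = 2" using less.prems(1) by (auto simp: graph_def)
  obtain e where e: "e \<in> M2" "a \<in> e" using less.prems(10) less.prems(5-9) by blast
  obtain w where w: "w \<noteq> a" "e = {a, w}" using card2_obtain[of e a] e c2 less.prems(5) by blast
  have eF: "e \<in> F" using e less.prems(5) by auto
  have "\<exists>f\<in>M1. w \<in> f"
  proof (rule ccontr)
    assume "\<not> ?thesis"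
    then have "matching (insert e M1)" using less.prems(3,8) w
      by (intro matching_insert) auto
    moreover have "e \<notin> M1" using less.prems(8) e by auto
    moreover have "finite M1" using less.prems(2) finF finite_subset by auto
    ultimately have "card (insert e M1) \<le> nu F" "card (insert e M1) = card M1 + 1"
      using nu_ge[OF finF, of "insert e M1"] eF less.prems(2) by auto
    then show False using less.prems(4) by simp
  qed
  then obtain f where f: "f \<in> M1" "w \<in> f" by blast
  obtain z where z: "z \<noteq> w" "f = {w, z}" using card2_obtain[of f w] f c2 less.prems(2) by blast
  have fF: "f \<in> F" using f less.prems(2) by auto
  have za: "z \<noteq> a" using less.prems(8) f z by auto
  have bw: "b \<noteq> w" using less.prems(9) e w by auto
  have finM1: "finite M1" "finite M2" using less.prems(2,5) finF finite_subset by auto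
  have nupos: "nu F \<ge> 1" proof -
    have "card M2 > 0" using e finM1 card_gt_0_iff by blast
    then show ?thesis using less.prems(7) by simp
  qed
  show ?case
  proof (cases "z = b")
    case True
    show ?thesis
      apply (rule exI[of _ "[a, w, b]"])
      using True w z za bw nupos eF fF
      by (auto simp: nth_Cons split: nat.splits)
  next
    case zb: False
    define F' where "F' = {g\<in>F. a \<notin> g \<and> w \<notin> g}"
    define M1' where "M1' = M1 - {f}"
    define M2' where "M2' = M2 - {e}"
    have gF': "graph F'" using less.prems(1) by (auto simp: graph_def F'_def)
    have finF': "finite F'" using gF' by (auto simp: graph_def)
    have M1'F': "M1' \<subseteq> F'"
    proof
      fix g assume g: "g \<in> M1'"
      then have "g \<in> M1" "g \<noteq> f" by (auto simp: M1'_def)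
      then have "g \<inter> f = {}" using less.prems(3) f by (auto simp: matching_def)
      then show "g \<in> F'" using \<open>g \<in> M1\<close> less.prems(2,8) f by (auto simp: F'_def)
    qed
    have M2'F': "M2' \<subseteq> F'"
    proof
      fix g assume g: "g \<in> M2'"
      then have "g \<in> M2" "g \<noteq> e" by (auto simp: M2'_def)
      then have "g \<inter> e = {}" using less.prems(6) e by (auto simp: matching_def)
      then show "g \<in> F'" using \<open>g \<in> M2\<close> less.prems(5) w by (auto simp: F'_def)
    qed
    have mM1': "matching M1'" "matching M2'" using less.prems(3,6)
      by (auto simp: matching_def M1'_def M2'_def)
    have cM1': "card M1' = nu F - 1" "card M2' = nu F - 1"
      using less.prems(4,7) f e finM1 by (auto simp: M1'_def M2'_def)
    have nuF': "nu F' = nu F - 1"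
    proof -
      obtain N where N: "N \<subseteq> F'" "matching N" "card N = nu F'" using nu_ex[OF finF'] by blast
      have "matching (insert e N)" using N w by (intro matching_insert) (auto simp: F'_def)
      moreover have "e \<notin> N" using N w by (auto simp: F'_def)
      moreover have "finite N" using N finF' finite_subset by auto
      moreover have "insert e N \<subseteq> F" using N eF by (auto simp: F'_def)
      ultimately have "card N + 1 \<le> nu F" using nu_ge[OF finF, of "insert e N"] by auto
      moreover have "card M2' \<le> nu F'" using nu_ge[OF finF' M2'F' mM1'(2)] .
      ultimately show ?thesis using N cM1' by linarith
    qed
    have zM1': "\<forall>g\<in>M1'. z \<notin> g"
    proof
      fix g assume "g \<in> M1'"
      then have "g \<in> M1" "g \<noteq> f" by (auto simp: M1'_def)
      then have "g \<inter> f = {}" using less.prems(3) f by (auto simp: matching_def)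
      then show "z \<notin> g" using z by auto
    qed
    have bM2': "\<forall>g\<in>M2'. b \<notin> g" using less.prems(9) by (auto simp: M2'_def)
    have noN: "\<forall>N. N \<subseteq> F' \<longrightarrow> matching N \<longrightarrow> card N = nu F' \<longrightarrow> (\<exists>g\<in>N. z \<in> g \<or> b \<in> g)"
    proof (intro allI impI, rule ccontr)
      fix N assume N: "N \<subseteq> F'" "matching N" "card N = nu F'" "\<not> (\<exists>g\<in>N. z \<in> g \<or> b \<in> g)"
      have "matching (insert f N)" using N z by (intro matching_insert) (auto simp: F'_def)
      moreover have "f \<notin> N" using N z by (auto simp: F'_def)
      moreover have "finite N" using N finF' finite_subset by auto
      moreover have "insert f N \<subseteq> F" using N fF by (auto simp: F'_def)
      ultimately have "card (insert f N) = nu F" using N(3) nuF' nupos by auto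
      then have "\<exists>g\<in>insert f N. a \<in> g \<or> b \<in> g"
        using less.prems(10) \<open>matching (insert f N)\<close> \<open>insert f N \<subseteq> F\<close> by blast
      then show False using N z za zb bw w by (auto simp: F'_def)
    qed
    have "card M1' < card M1" using f finM1 unfolding M1'_def by (intro card_Diff1_less)
    from less.hyps[OF this gF' M1'F' mM1'(1) _ M2'F' mM1'(2) _ zM1' bM2' noN]
    obtain P where P: "distinct P" "P \<noteq> []" "hd P = z" "last P = b" "odd (length P)"
      "length P \<le> 2 * nu F' + 1" "\<forall>i. i + 1 < length P \<longrightarrow> {P!i, P!(i+1)} \<in> F'"
      using cM1' nuF' by auto
    have lenP: "length P \<ge> 2"
    proof (rule ccontr)
      assume "\<not> ?thesis"
      then have "length P = 1" using P(2) by (cases P) (auto simp: not_le)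
      then have "hd P = last P" by (cases P) auto
      then show False using P zb by simp
    qed
    have notin: "a \<notin> set P \<and> w \<notin> set P"
    proof -
      { fix i assume i: "i < length P"
        have "P!i \<notin> {a, w}"
        proof (cases "i + 1 < length P")
          case True then show ?thesis using P(7) by (auto simp: F'_def)
        next
          case False
          then have "(i - 1) + 1 < length P" "Suc (i - 1) = i" using i lenP by auto
          then have "{P!(i-1), P!i} \<in> F'" using P(7) by (metis Suc_eq_plus1)
          then show ?thesis by (auto simp: F'_def)
        qed }
      then show ?thesis by (auto simp: in_set_conv_nth)
    qed
    have hdP: "P!0 = z" using P(2,3) by (simp add: hd_conv_nth)
    show ?thesis
    proof (rule exI[of _ "a # w # P"], intro conjI)
      show "distinct (a # w # P)" using P(1) notin w by auto
      show "last (a # w # P) = b" using P(2,4) by auto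
      show "length (a # w # P) \<le> 2 * nu F + 1" using P(6) nuF' nupos by auto
      show "\<forall>i. i + 1 < length (a # w # P) \<longrightarrow> {(a # w # P)!i, (a # w # P)!(i+1)} \<in> F"
      proof (intro allI impI)
        fix i assume i: "i + 1 < length (a # w # P)"
        consider "i = 0" | "i = 1" | k where "i = Suc (Suc k)" by (metis One_nat_def not0_implies_Suc)
        then show "{(a # w # P)!i, (a # w # P)!(i+1)} \<in> F"
        proof cases
          case 1 then show ?thesis using eF w by simp
        next
          case 2 then show ?thesis using fF z hdP by (simp add: insert_commute)
        next
          case 3 then show ?thesis using P(7) i by (auto simp: F'_def)
        qed
      qed
    qed (use P in auto)
  qed
qed



definition cw :: "'a set set \<Rightarrow> 'a list \<Rightarrow> bool" where
  "cw F ws \<longleftrightarrow> ws \<noteq> [] \<and> (\<forall>i<length ws. {ws!i, ws!(Suc i mod length ws)} \<in> F)"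

definition cov :: "'a set set \<Rightarrow> 'a set \<Rightarrow> bool" where
  "cov F D \<longleftrightarrow> (\<forall>e\<in>F. e \<inter> D \<noteq> {})"

lemma cw_rotate: assumes "cw F ws" shows "cw F (rotate r ws)"
proof -
  let ?n = "length ws"
  have n: "?n > 0" using assms by (auto simp: cw_def)
  { fix i assume i: "i < ?n"
    have "Suc ((r + i) mod ?n) mod ?n = (r + Suc i mod ?n) mod ?n"
      by (simp add: mod_Suc_eq mod_add_right_eq)
    moreover have "{ws!((r + i) mod ?n), ws!(Suc ((r + i) mod ?n) mod ?n)} \<in> F"
      using assms n by (auto simp: cw_def)
    ultimately have "{rotate r ws ! i, rotate r ws ! (Suc i mod ?n)} \<in> F"
      using i n by (simp add: nth_rotate)
  }
  then show ?thesis using assms by (auto simp: cw_def)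
qed

lemma cw_take_rotate:
  assumes "cw F vs" "r < length vs" "1 \<le> m" "m \<le> length vs"
    "{vs!((r + m - 1) mod length vs), vs!r} \<in> F"
  shows "cw F (take m (rotate r vs))"
proof -
  let ?n = "length vs" and ?rs = "rotate r vs"
  have cr: "cw F ?rs" using cw_rotate[OF assms(1)] .
  have lr: "length ?rs = ?n" by simp
  { fix i assume i: "i < m"
    have "{take m ?rs ! i, take m ?rs ! (Suc i mod m)} \<in> F"
    proof (cases "Suc i < m")
      case True
      have "Suc i mod ?n = Suc i" using True assms(4) by simp
      have "{?rs ! i, ?rs ! (Suc i mod ?n)} \<in> F" using cr i assms(4) unfolding cw_def by auto
      then show ?thesis using True assms(4) \<open>Suc i mod ?n = Suc i\<close> by simp
    next
      case False
      then have im: "i = m - 1" "Suc i = m" using i by auto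
      then have im2: "Suc i mod m = 0" by simp
      have "?rs ! i = vs!((r + m - 1) mod ?n)" using im i assms(3,4) by (simp add: nth_rotate)
      moreover have "?rs ! 0 = vs ! r" using nth_rotate[of 0 vs r] assms(2) by (cases vs) auto
      ultimately show ?thesis using im im2 assms(5) i assms(3) by simp
    qed }
  then show ?thesis using assms(3,4) cw_def[of F vs] assms(1) by (auto simp: cw_def)
qed

lemma nm0:
  assumes "cw F rs" "distinct rs" "length rs = 2 * s + 1"
  shows "\<exists>M. M \<subseteq> F \<and> matching M \<and> card M = s \<and> (\<forall>e\<in>M. rs!0 \<notin> e) \<and> \<Union>M \<subseteq> set rs"
proof -
  define g where "g i = {rs!(2*i+1), rs!(2*i+2)}" for i
  let ?M = "g ` {..<s}"
  have sub: "?M \<subseteq> F"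
  proof
    fix e assume "e \<in> ?M"
    then obtain i where i: "i < s" "e = g i" by auto
    have "Suc (2*i+1) mod length rs = 2*i+2" using i assms(3) by simp
    moreover have "2*i+1 < length rs" using i assms(3) by simp
    ultimately show "e \<in> F" using assms(1) i unfolding cw_def g_def
      by (metis add_2_eq_Suc')
  qed
  have dj: "g i \<inter> g k = {}" if "i < s" "k < s" "i \<noteq> k" for i k
    using that assms(2,3) unfolding g_def by (auto simp: nth_eq_iff_index_eq)
  have mt: "matching ?M" unfolding matching_def using dj by blast
  have inj: "inj_on g {..<s}"
  proof
    fix i k assume "i \<in> {..<s}" "k \<in> {..<s}" "g i = g k"
    then show "i = k" using dj[of i k] by (auto simp: g_def)
  qed
  have c: "card ?M = s" using card_image[OF inj] by simp
  have n0: "\<forall>e\<in>?M. rs!0 \<notin> e" using assms(2,3) unfolding g_def by (auto simp: nth_eq_iff_index_eq)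
  have "\<Union>?M \<subseteq> set rs" using assms(3) unfolding g_def by auto
  then show ?thesis using sub mt c n0 by blast
qed

lemma nm:
  assumes "cw F vs" "distinct vs" "length vs = 2 * s + 1" "j < length vs"
  shows "\<exists>M. M \<subseteq> F \<and> matching M \<and> card M = s \<and> (\<forall>e\<in>M. vs!j \<notin> e) \<and> \<Union>M \<subseteq> set vs"
proof -
  have "rotate j vs ! 0 = vs ! j" using nth_rotate[of 0 vs j] assms(4) by (cases vs) auto
  then show ?thesis using nm0[of F "rotate j vs" s] cw_rotate[OF assms(1)] assms by auto
qed



lemma chord:
  assumes "cw F vs" "distinct vs" "n = length vs" "odd n"
    "\<forall>ws. cw F ws \<and> odd (length ws) \<longrightarrow> length ws \<ge> n"
    "i < j" "j < n" "{vs!i, vs!j} \<in> F"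
  shows "j = i + 1 \<or> (i = 0 \<and> j = n - 1)"
proof (rule ccontr)
  assume nc: "\<not> ?thesis"
  have len: "length (take m (rotate r vs)) = m" if "m \<le> n" for m r using that assms(3) by simp
  show False
  proof (cases "even (j - i)")
    case True
    define m where "m = j - i + 1"
    have m1: "(i + m - 1) mod n = j" using assms(6,7) by (simp add: m_def)
    have m2: "odd m" using True by (simp add: m_def)
    have m3: "m < n"
    proof -
      have "j - i \<noteq> 1" using True by (metis odd_one)
      then have "j \<noteq> i + 1" by auto
      then have "\<not> (i = 0 \<and> j = n - 1)" using nc by auto
      then show ?thesis using assms(6,7) unfolding m_def by linarith
    qed
    have "{vs ! ((i + m - 1) mod length vs), vs ! i} \<in> F" using m1 assms(3,8) by (simp add: insert_commute)
    then have "cw F (take m (rotate i vs))"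
      using assms(1,3,6,7) m3 by (intro cw_take_rotate) (auto simp: m_def)
    then show False using assms(5) len[of m i] m2 m3 by fastforce
  next
    case False
    define m where "m = n - (j - i) + 1"
    have ji3: "j - i \<ge> 3"
    proof -
      have "j - i \<noteq> 1" using nc assms(6) by auto
      moreover obtain k where "j - i = 2 * k + 1" using False oddE by blast
      ultimately show ?thesis by (cases k) auto
    qed
    have "j + m - 1 = n + i" using assms(6,7) by (simp add: m_def)
    then have m1: "(j + m - 1) mod n = i" using assms(6,7) by simp
    have m2: "odd m" using False assms(4,6,7) by (simp add: m_def)
    have m3: "m < n" using ji3 assms(6,7) by (simp add: m_def)
    have "{vs ! ((j + m - 1) mod length vs), vs ! j} \<in> F" using m1 assms(3,8) by simp
    then have "cw F (take m (rotate j vs))"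
      using assms(1,3,6,7) m3 by (intro cw_take_rotate) (auto simp: m_def)
    then show False using assms(5) len[of m j] m2 m3 by fastforce
  qed
qed

lemma cyc_cover:
  assumes g: "graph F" and nuF: "nu F = s" and c: "cw F vs" and d: "distinct vs"
    and l: "length vs = 2 * s + 1"
    and no: "\<forall>ws. cw F ws \<and> odd (length ws) \<longrightarrow> length ws \<ge> 2 * s + 1"
  shows "\<exists>D. finite D \<and> cov F D \<and> card D \<le> s + 1"
proof -
  have finF: "finite F" and c2: "\<forall>e\<in>F. card e = 2" using g by (auto simp: graph_def)
  have sub: "e \<subseteq> set vs" if e: "e \<in> F" for e
  proof (rule ccontr)
    assume "\<not> ?thesis"
    then obtain x where x: "x \<in> e" "x \<notin> set vs" by blast
    obtain y where y: "y \<noteq> x" "e = {x, y}" using card2_obtain[of e x] x c2 e by blast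
    have "\<exists>j. j < length vs \<and> (y \<in> set vs \<longrightarrow> vs!j = y)"
    proof (cases "y \<in> set vs")
      case True then show ?thesis by (auto simp: in_set_conv_nth)
    next
      case False then show ?thesis using l by (intro exI[of _ 0]) auto
    qed
    then obtain j where j: "j < length vs" "y \<in> set vs \<longrightarrow> vs!j = y" by blast
    obtain M where M: "M \<subseteq> F" "matching M" "card M = s" "\<forall>f\<in>M. vs!j \<notin> f" "\<Union>M \<subseteq> set vs"
      using nm[OF c d l j(1)] by blast
    have yM: "\<forall>f\<in>M. y \<notin> f" using M(4,5) j(2) by blast
    have "matching (insert e M)" using M(2,5) yM x y by (intro matching_insert) auto
    moreover have "e \<notin> M" using M(5) x by blast
    moreover have "finite M" using M(1) finF finite_subset by auto
    ultimately have "card (insert e M) \<le> nu F" "card (insert e M) = s + 1"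
      using nu_ge[OF finF, of "insert e M"] e M by auto
    then show False using nuF by simp
  qed
  define D where "D = (\<lambda>i. vs!(2*i)) ` {..s}"
  have "finite D" "card D \<le> s + 1" unfolding D_def using card_image_le[of "{..s}"] by auto
  moreover have "cov F D" unfolding cov_def
  proof
    fix e assume e: "e \<in> F"
    obtain x y where xy: "x \<noteq> y" "e = {x, y}" using c2 e card_2_iff[of e] by auto
    have "x \<in> set vs" "y \<in> set vs" using sub[OF e] xy by auto
    then obtain i j where i: "i < length vs" "vs!i = x" and j: "j < length vs" "vs!j = y"
      by (auto simp: in_set_conv_nth)
    have ij: "i \<noteq> j" using i j xy by auto
    have nol: "\<forall>ws. cw F ws \<and> odd (length ws) \<longrightarrow> length ws \<ge> length vs" using no l by simp
    have key: "\<exists>k<length vs. even k \<and> vs!k \<in> e" if "a < b" "b < length vs" "{vs!a, vs!b} = e" for a b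
    proof -
      have "{vs!a, vs!b} \<in> F" using that e by simp
      have "odd (length vs)" using l by simp
      from chord[OF c d refl this nol that(1,2) \<open>{vs!a, vs!b} \<in> F\<close>]
      have "b = a + 1 \<or> (a = 0 \<and> b = length vs - 1)" .
      then show ?thesis
      proof
        assume ab: "b = a + 1"
        show ?thesis
        proof (cases "even a")
          case True then show ?thesis using that by (intro exI[of _ a]) auto
        next
          case False then show ?thesis using that ab by (intro exI[of _ b]) auto
        qed
      next
        assume "a = 0 \<and> b = length vs - 1"
        then show ?thesis using that by (intro exI[of _ 0]) auto
      qed
    qed
    have "\<exists>k<length vs. even k \<and> vs!k \<in> e"
    proof (cases "i < j")
      case True then show ?thesis using key[of i j] i j xy by auto
    next
      case False then have "j < i" using ij by auto
      then show ?thesis using key[of j i] i j xy by (auto simp: insert_commute)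
    qed
    then obtain k where k: "k < length vs" "even k" "vs!k \<in> e" by blast
    then have "vs!k \<in> D" unfolding D_def using l
      by (intro image_eqI[of _ _ "k div 2"]) auto
    then show "e \<inter> D \<noteq> {}" using k by blast
  qed
  ultimately show ?thesis by blast
qed



lemma cw_mono: "cw F ws \<Longrightarrow> F \<subseteq> F' \<Longrightarrow> cw F' ws"
  unfolding cw_def by blast

lemma odd_ge: "odd (n::nat) \<Longrightarrow> 2 * s < n + 1 \<Longrightarrow> n \<ge> 2 * s + 1"
  by presburger

lemma mainP:
  "graph F \<Longrightarrow> nu F < s \<Longrightarrow> (\<forall>ws. cw F ws \<and> odd (length ws) \<longrightarrow> 2 * s < length ws + 3)
   \<Longrightarrow> \<exists>D. finite D \<and> cov F D \<and> card D \<le> s"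
proof (induction s arbitrary: F)
  case 0 then show ?case by simp
next
  case (Suc s)
  have finF: "finite F" and c2: "\<forall>e\<in>F. card e = 2" using Suc.prems(1) by (auto simp: graph_def)
  show ?case
  proof (cases "s = 0")
    case True
    have "F = {}"
    proof (rule ccontr)
      assume "F \<noteq> {}"
      then obtain e where "e \<in> F" by blast
      then have "card {e} \<le> nu F" using nu_ge[OF finF, of "{e}"] by (auto simp: matching_def)
      then show False using Suc.prems(2) True by simp
    qed
    then show ?thesis by (intro exI[of _ "{}"]) (auto simp: cov_def)
  next
    case s0: False
    have wk: "\<forall>ws. cw F ws \<and> odd (length ws) \<longrightarrow> 2 * s < length ws + 3" using Suc.prems(3) by auto
    show ?thesis
    proof (cases "nu F < s")
      case True
      from Suc.IH[OF Suc.prems(1) True wk] show ?thesis by auto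
    next
      case False
      then have nuF: "nu F = s" using Suc.prems(2) by simp
      show ?thesis
      proof (cases "\<exists>v. nu {e\<in>F. v \<notin> e} < s")
        case True
        then obtain v where v: "nu {e\<in>F. v \<notin> e} < s" by blast
        have g': "graph {e\<in>F. v \<notin> e}" using Suc.prems(1) by (auto simp: graph_def)
        have wk': "\<forall>ws. cw {e\<in>F. v \<notin> e} ws \<and> odd (length ws) \<longrightarrow> 2 * s < length ws + 3"
          using wk cw_mono[of "{e\<in>F. v \<notin> e}" _ F] by blast
        obtain D' where D': "finite D'" "cov {e\<in>F. v \<notin> e} D'" "card D' \<le> s"
          using Suc.IH[OF g' v wk'] by blast
        have "cov F (insert v D')" using D'(2) by (auto simp: cov_def)
        moreover have "card (insert v D') \<le> Suc s" using D'(1,3) by (simp add: card_insert_if)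
        ultimately show ?thesis using D'(1) by blast
      next
        case False
        then have ne: "\<forall>v. nu {e\<in>F. v \<notin> e} \<ge> s" using not_less by blast
        have miss: "\<exists>M. M \<subseteq> F \<and> matching M \<and> card M = nu F \<and> (\<forall>e\<in>M. v \<notin> e)" for v
        proof -
          have fin': "finite {e\<in>F. v \<notin> e}" using finF by auto
          obtain N where N: "N \<subseteq> {e\<in>F. v \<notin> e}" "matching N" "card N = nu {e\<in>F. v \<notin> e}"
            using nu_ex[OF fin'] by blast
          have "card N \<le> nu F" using nu_ge[OF finF, of N] N by auto
          then have "card N = nu F" using ne[rule_format, of v] N(3) nuF by simp
          then show ?thesis using N by blast
        qed
        show ?thesis
        proof (cases "F = {}")
          case True then show ?thesis by (intro exI[of _ "{}"]) (auto simp: cov_def)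
        next
          case False
          then obtain e where e: "e \<in> F" by blast
          then obtain u v where uv: "u \<noteq> v" "e = {u, v}" using c2 card_2_iff[of e] by auto
          obtain M1 where M1: "M1 \<subseteq> F" "matching M1" "card M1 = nu F" "\<forall>e\<in>M1. u \<notin> e"
            using miss by blast
          obtain M2 where M2: "M2 \<subseteq> F" "matching M2" "card M2 = nu F" "\<forall>e\<in>M2. v \<notin> e"
            using miss by blast
          have h10: "\<forall>N. N \<subseteq> F \<longrightarrow> matching N \<longrightarrow> card N = nu F \<longrightarrow> (\<exists>f\<in>N. u \<in> f \<or> v \<in> f)"
          proof (intro allI impI, rule ccontr)
            fix N assume N: "N \<subseteq> F" "matching N" "card N = nu F" "\<not> (\<exists>f\<in>N. u \<in> f \<or> v \<in> f)"
            have "matching (insert e N)" using N uv by (intro matching_insert) auto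
            moreover have "e \<notin> N" using N uv by auto
            moreover have "finite N" using N finF finite_subset by auto
            ultimately have "card (insert e N) \<le> nu F" "card (insert e N) = nu F + 1"
              using nu_ge[OF finF, of "insert e N"] e N by auto
            then show False by simp
          qed
          obtain P where P: "distinct P" "P \<noteq> []" "hd P = u" "last P = v" "odd (length P)"
            "length P \<le> 2 * nu F + 1" "\<forall>i. i + 1 < length P \<longrightarrow> {P!i, P!(i+1)} \<in> F"
            using lemL[OF Suc.prems(1) M1(1-3) M2(1-3) M1(4) M2(4) h10] by blast
          have cP: "cw F P"
            unfolding cw_def
          proof (intro conjI allI impI)
            show "P \<noteq> []" by fact
            fix i assume i: "i < length P"
            show "{P ! i, P ! (Suc i mod length P)} \<in> F"
            proof (cases "Suc i < length P")
              case True then show ?thesis using P(7) by simp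
            next
              case False
              then have "Suc i = length P" "i = length P - 1" using i by auto
              then have "P!i = v" "P!(Suc i mod length P) = u" using P(2,3,4)
                by (auto simp: last_conv_nth hd_conv_nth)
              then show ?thesis using e uv by (simp add: insert_commute)
            qed
          qed
          have no: "\<forall>ws. cw F ws \<and> odd (length ws) \<longrightarrow> length ws \<ge> 2 * s + 1"
          proof (intro allI impI)
            fix ws assume ws: "cw F ws \<and> odd (length ws)"
            then have "2 * s < length ws + 1" using Suc.prems(3) by auto
            then show "length ws \<ge> 2 * s + 1" using odd_ge ws by blast
          qed
          have "length P \<ge> 2 * s + 1" using no cP P(5) by blast
          then have lP: "length P = 2 * s + 1" using P(6) nuF by simp
          from cyc_cover[OF Suc.prems(1) nuF cP P(1) lP no] show ?thesis by simp
        qed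
      qed
    qed
  qed
qed



lemma oddwalk:
  assumes "simple_graph E" "cw E ws" "odd (length ws)"
  shows "\<exists>k \<le> length ws. odd k \<and> has_cycle_of_length E k"
  using assms(2,3)
proof (induction "length ws" arbitrary: ws rule: less_induct)
  case less
  let ?n = "length ws"
  have c2: "\<forall>e\<in>E. card e = 2" using assms(1) by (simp add: simple_graph_def)
  have npos: "?n > 0" using less.prems by (auto simp: cw_def)
  show ?case
  proof (cases "distinct ws")
    case True
    have "?n \<noteq> 1"
    proof
      assume "?n = 1"
      then have "{ws!0, ws!0} \<in> E" using less.prems(1) by (auto simp: cw_def)
      then show False using c2 by fastforce
    qed
    then have "?n \<ge> 3" using less.prems(2) npos by presburger
    then have "has_cycle_of_length E ?n"
      unfolding has_cycle_of_length_def using True less.prems(1)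
      by (auto simp: cw_def intro!: exI[of _ ws])
    then show ?thesis using less.prems(2) by blast
  next
    case False
    then obtain i j where ij: "i < j" "j < ?n" "ws!i = ws!j"
      by (metis distinct_conv_nth linorder_neqE_nat)
    define d where "d = j - i"
    have cwA: "cw E (take d (rotate i ws))"
    proof (rule cw_take_rotate[OF less.prems(1)])
      show "i < ?n" "1 \<le> d" "d \<le> ?n" using ij by (auto simp: d_def)
      have "(i + d - 1) mod ?n = j - 1" using ij by (simp add: d_def)
      moreover have "Suc (j - 1) mod ?n = j" using ij by simp
      moreover have "j - 1 < ?n" using ij by simp
      ultimately show "{ws ! ((i + d - 1) mod ?n), ws ! i} \<in> E"
        using less.prems(1) ij(3) unfolding cw_def by (metis)
    qed
    have cwB: "cw E (take (?n - d) (rotate j ws))"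
    proof (rule cw_take_rotate[OF less.prems(1)])
      show "j < ?n" "1 \<le> ?n - d" "?n - d \<le> ?n" using ij by (auto simp: d_def)
      have "j + (?n - d) - 1 = i + ?n - 1" using ij by (simp add: d_def)
      then have "(j + (?n - d) - 1) mod ?n = (i + ?n - 1) mod ?n" by simp
      moreover have "Suc ((i + ?n - 1) mod ?n) mod ?n = i"
      proof -
        have "Suc (i + ?n - 1) = i + ?n" using npos by simp
        then have "Suc (i + ?n - 1) mod ?n = i" using ij by simp
        then show ?thesis by (simp add: mod_Suc_eq)
      qed
      moreover have "(i + ?n - 1) mod ?n < ?n" using npos by simp
      ultimately show "{ws ! ((j + (?n - d) - 1) mod ?n), ws ! j} \<in> E"
        using less.prems(1) ij(3) unfolding cw_def by (metis)
    qed
    have lA: "length (take d (rotate i ws)) = d" using ij by (simp add: d_def)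
    have lB: "length (take (?n - d) (rotate j ws)) = ?n - d" by simp
    have dlt: "d < ?n" "?n - d < ?n" "0 < d" using ij by (auto simp: d_def)
    show ?thesis
    proof (cases "odd d")
      case True
      from less.hyps[of "take d (rotate i ws)"] cwA lA dlt True
      obtain k where "k \<le> d" "odd k" "has_cycle_of_length E k" by auto
      then show ?thesis using dlt by (intro exI[of _ k]) auto
    next
      case False
      then have "odd (?n - d)" using less.prems(2) dlt by simp
      from less.hyps[of "take (?n - d) (rotate j ws)"] cwB lB dlt this
      obtain k where "k \<le> ?n - d" "odd k" "has_cycle_of_length E k" by auto
      then show ?thesis by (intro exI[of _ k]) auto
    qed
  qed
qed

definition blow :: "'v set set \<Rightarrow> ('v \<Rightarrow> nat) \<Rightarrow> ('v \<times> nat) set set" where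
  "blow E a = {{(u,i),(v,j)} | u v i j. {u,v} \<in> E \<and> i < a u \<and> j < a v}"

lemma blow_graph:
  fixes E :: "('v::finite) set set"
  assumes "simple_graph E" shows "graph (blow E a)"
proof -
  define S where "S = Sigma (UNIV::'v set) (\<lambda>v. {..<a v})"
  have "finite S" unfolding S_def by auto
  have "blow E a \<subseteq> (\<lambda>(x,y). {x,y}) ` (S \<times> S)"
  proof
    fix e assume "e \<in> blow E a"
    then obtain u v i j where uv: "e = {(u,i),(v,j)}" "i < a u" "j < a v" unfolding blow_def by blast
    have "((u,i),(v,j)) \<in> S \<times> S" using uv(2,3) unfolding S_def by simp
    moreover have "e = (\<lambda>(x,y). {x,y}) ((u,i),(v,j))" using uv(1) by simp
    ultimately show "e \<in> (\<lambda>(x,y). {x,y}) ` (S \<times> S)" by (rule rev_image_eqI)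
  qed
  then have "finite (blow E a)" using \<open>finite S\<close> finite_subset by blast
  moreover have "\<forall>e\<in>blow E a. card e = 2"
  proof
    fix e assume "e \<in> blow E a"
    then obtain u v i j where uv: "e = {(u,i),(v,j)}" "{u,v} \<in> E" unfolding blow_def by blast
    have "card {u,v} = 2" using assms uv(2) unfolding simple_graph_def by blast
    then have "u \<noteq> v" by (cases "u = v") auto
    then show "card e = 2" using uv(1) by simp
  qed
  ultimately show ?thesis by (simp add: graph_def)
qed

lemma blow_walk:
  assumes "cw (blow E a) ws" shows "cw E (map fst ws)"
proof -
  { fix x y assume "{x, y} \<in> blow E a"
    then obtain u v i j where "{x,y} = {(u,i),(v,j)}" "{u,v} \<in> E" unfolding blow_def by blast
    then have "(x = (u,i) \<and> y = (v,j)) \<or> (x = (v,j) \<and> y = (u,i))" by (simp add: doubleton_eq_iff)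
    moreover have "{v,u} = {u,v}" by (rule insert_commute)
    ultimately have "{fst x, fst y} \<in> E" using \<open>{u,v} \<in> E\<close> by auto }
  then show ?thesis using assms unfolding cw_def by auto
qed

lemma blow_cover:
  fixes E :: "('v::finite) set set"
  assumes "finite D" "cov (blow E a) D" "simple_graph E"
  shows "\<exists>C. vertex_cover E C \<and> (\<Sum>v\<in>C. a v) \<le> card D"
proof -
  define C where "C = {v. \<forall>i<a v. (v,i) \<in> D}"
  have "vertex_cover E C" unfolding vertex_cover_def
  proof
    fix e assume e: "e \<in> E"
    show "e \<inter> C \<noteq> {}"
    proof
      assume none: "e \<inter> C = {}"
      have "card e = 2" using e assms(3) unfolding simple_graph_def by blast
      then obtain u v where uv: "e = {u,v}" by (meson card_2_iff)
      then have "u \<notin> C" "v \<notin> C" using none by auto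
      then obtain i j where ij: "i < a u" "(u,i) \<notin> D" "j < a v" "(v,j) \<notin> D" unfolding C_def by auto
      have "{(u,i),(v,j)} \<in> blow E a" unfolding blow_def
        using ij(1,3) e uv by blast
      then have "{(u,i),(v,j)} \<inter> D \<noteq> {}" using assms(2) unfolding cov_def by blast
      then show False using ij(2,4) by blast
    qed
  qed
  moreover have "(\<Sum>v\<in>C. a v) = card (Sigma C (\<lambda>v. {..<a v}))" by (simp add: card_SigmaI)
  moreover have "Sigma C (\<lambda>v. {..<a v}) \<subseteq> D" unfolding C_def by auto
  then have "card (Sigma C (\<lambda>v. {..<a v})) \<le> card D" using assms(1) by (rule card_mono[rotated])
  ultimately show ?thesis by auto
qed



lemma min_cover_below:
  fixes C :: "('v::finite) set"
  shows "vertex_cover E C \<Longrightarrow> \<exists>C0 \<subseteq> C. minimal_vertex_cover E C0"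
proof (induction "card C" arbitrary: C rule: less_induct)
  case less
  show ?case
  proof (cases "minimal_vertex_cover E C")
    case True then show ?thesis by blast
  next
    case False
    then obtain D where D: "D \<subset> C" "vertex_cover E D" using less.prems
      unfolding minimal_vertex_cover_def by blast
    then have "card D < card C" by (intro psubset_card_mono) auto
    from less.hyps[OF this D(2)] D(1) show ?thesis by blast
  qed
qed

lemma comb:
  fixes E :: "('v::finite) set set"
  assumes sg: "simple_graph E"
    and cyc: "\<forall>k. odd k \<and> int k \<le> 2 * int s - 3 \<longrightarrow> \<not> has_cycle_of_length E k"
    and wt: "\<forall>C. minimal_vertex_cover E C \<longrightarrow> s + 1 \<le> (\<Sum>v\<in>C. a v)"
  shows "\<exists>M. M \<subseteq> blow E a \<and> matching M \<and> card M = s"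
proof -
  have g: "graph (blow E a)" using blow_graph[OF sg] .
  have finH: "finite (blow E a)" using g by (simp add: graph_def)
  have wk: "\<forall>ws. cw (blow E a) ws \<and> odd (length ws) \<longrightarrow> 2 * s < length ws + 3"
  proof (intro allI impI)
    fix ws assume ws: "cw (blow E a) ws \<and> odd (length ws)"
    then have "cw E (map fst ws)" "odd (length (map fst ws))" using blow_walk by auto
    from oddwalk[OF sg this] obtain k where k: "k \<le> length ws" "odd k" "has_cycle_of_length E k"
      by auto
    then have "\<not> (int k \<le> 2 * int s - 3)" using cyc by blast
    then show "2 * s < length ws + 3" using k(1) by linarith
  qed
  show ?thesis
  proof (cases "nu (blow E a) < s")
    case True
    obtain D where D: "finite D" "cov (blow E a) D" "card D \<le> s" using mainP[OF g True wk] by blast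
    obtain C where C: "vertex_cover E C" "(\<Sum>v\<in>C. a v) \<le> card D" using blow_cover[OF D(1,2) sg] by blast
    obtain C0 where C0: "C0 \<subseteq> C" "minimal_vertex_cover E C0" using min_cover_below[OF C(1)] by blast
    have "(\<Sum>v\<in>C0. a v) \<le> (\<Sum>v\<in>C. a v)" using C0(1) by (intro sum_mono2) auto
    then show ?thesis using wt C0(2) C(2) D(3) by fastforce
  next
    case False
    obtain M where M: "M \<subseteq> blow E a" "matching M" "card M = nu (blow E a)" using nu_ex[OF finH] by blast
    obtain T where T: "T \<subseteq> M" "card T = s" using obtain_subset_with_card_n[of s M] M(3) False by auto
    have "matching T" using M(2) T(1) unfolding matching_def by blast
    then show ?thesis using T M(1) by blast
  qed
qed



lemma ideal_gen_ideal: "is_ideal (ideal_gen S)"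
  unfolding ideal_gen_def is_ideal_def by auto

lemma ideal_gen_sub: "S \<subseteq> ideal_gen S"
  unfolding ideal_gen_def by auto

lemma ideal_gen_least: "is_ideal I \<Longrightarrow> S \<subseteq> I \<Longrightarrow> ideal_gen S \<subseteq> I"
  unfolding ideal_gen_def by auto

lemma ideal_sum: "is_ideal I \<Longrightarrow> (\<forall>x\<in>A. f x \<in> I) \<Longrightarrow> sum f A \<in> I"
proof (induction A rule: infinite_finite_induct)
  case (infinite A) then show ?case by (simp add: is_ideal_def)
next
  case empty then show ?case by (simp add: is_ideal_def)
next
  case (insert x F) then show ?case by (simp add: is_ideal_def)
qed

lemma poly_expand: "(p :: ('a \<Rightarrow>\<^sub>0 nat) \<Rightarrow>\<^sub>0 'k::comm_ring_1) = (\<Sum>m\<in>Poly_Mapping.keys p. Poly_Mapping.single m (Poly_Mapping.lookup p m))"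
proof (rule poly_mapping_eqI)
  fix k
  have "Poly_Mapping.lookup (\<Sum>m\<in>Poly_Mapping.keys p. Poly_Mapping.single m (Poly_Mapping.lookup p m)) k
      = (\<Sum>m\<in>Poly_Mapping.keys p. (Poly_Mapping.lookup p m when m = k))"
    by (simp add: lookup_sum lookup_single)
  also have "\<dots> = Poly_Mapping.lookup p k"
  proof (cases "k \<in> Poly_Mapping.keys p")
    case True
    then show ?thesis by (simp add: when_def sum.delta)
  next
    case False
    then have "\<forall>m\<in>Poly_Mapping.keys p. (Poly_Mapping.lookup p m when m = k) = 0" by (auto simp: when_def)
    then show ?thesis using False by (simp add: in_keys_iff)
  qed
  finally show "Poly_Mapping.lookup p k = Poly_Mapping.lookup (\<Sum>m\<in>Poly_Mapping.keys p. Poly_Mapping.single m (Poly_Mapping.lookup p m)) k" by simp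
qed

lemma ideal_monomials:
  fixes p :: "('a \<Rightarrow>\<^sub>0 nat) \<Rightarrow>\<^sub>0 'k::comm_ring_1"
  assumes "is_ideal I" "\<forall>m\<in>Poly_Mapping.keys p. Poly_Mapping.single m 1 \<in> I"
  shows "p \<in> I"
proof -
  have "\<forall>m\<in>Poly_Mapping.keys p. Poly_Mapping.single m (Poly_Mapping.lookup p m) \<in> I"
  proof
    fix m assume "m \<in> Poly_Mapping.keys p"
    then have "Poly_Mapping.single 0 (Poly_Mapping.lookup p m) * Poly_Mapping.single m 1 \<in> I"
      using assms unfolding is_ideal_def by blast
    then show "Poly_Mapping.single m (Poly_Mapping.lookup p m) \<in> I" by (simp add: mult_single)
  qed
  then have "(\<Sum>m\<in>Poly_Mapping.keys p. Poly_Mapping.single m (Poly_Mapping.lookup p m)) \<in> I" by (rule ideal_sum[OF assms(1)])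
  then show ?thesis using poly_expand[of p] by simp
qed

definition wt :: "'v set \<Rightarrow> ('v \<Rightarrow>\<^sub>0 nat) \<Rightarrow> nat" where
  "wt C m = (\<Sum>v\<in>C. Poly_Mapping.lookup m v)"

definition J :: "'v set \<Rightarrow> nat \<Rightarrow> ('v, 'k::comm_ring_1) mpoly set" where
  "J C d = {p. \<forall>m\<in>Poly_Mapping.keys p. d \<le> wt C m}"

lemma wt_add: "wt C (m1 + m2) = wt C m1 + wt C m2"
  by (simp add: wt_def lookup_add sum.distrib)

lemma J_mult: "p \<in> J C a \<Longrightarrow> q \<in> J C b \<Longrightarrow> p * q \<in> J C (a + b)"
  unfolding J_def using keys_mult[of p q] by (force simp: wt_add)

lemma J_ideal: "is_ideal (J C d :: ('v, 'k::comm_ring_1) mpoly set)"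
  unfolding is_ideal_def
proof (intro conjI ballI allI)
  show "0 \<in> (J C d :: ('v, 'k) mpoly set)" by (simp add: J_def)
  fix a b :: "('v, 'k) mpoly" assume "a \<in> J C d" "b \<in> J C d"
  then show "a + b \<in> J C d" unfolding J_def using keys_add[of a b] by blast
next
  fix r a :: "('v, 'k) mpoly" assume "a \<in> J C d"
  moreover have "r \<in> J C 0" by (simp add: J_def)
  ultimately show "r * a \<in> J C d" using J_mult[of r C 0 a d] by simp
qed

lemma var_J:
  fixes C :: "('v::finite) set"
  assumes "c \<in> C" shows "(var c :: ('v, 'k::comm_ring_1) mpoly) \<in> J C 1"
proof -
  have "wt C (Poly_Mapping.single c 1) = 1"
    using assms by (simp add: wt_def lookup_single when_def)
  then show ?thesis by (simp add: J_def var_def)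
qed

lemma var_ideal_J:
  fixes C :: "('v::finite) set"
  shows "(var_ideal C :: ('v, 'k::comm_ring_1) mpoly set) \<subseteq> J C 1"
  unfolding var_ideal_def by (rule ideal_gen_least[OF J_ideal]) (auto intro: var_J[simplified])

lemma prod_list_J: "set xs \<subseteq> J C 1 \<Longrightarrow> prod_list xs \<in> J C (length xs)"
proof (induction xs)
  case Nil then show ?case by (simp add: J_def)
next
  case (Cons x xs)
  then have "x * prod_list xs \<in> J C (1 + length xs)" by (intro J_mult) auto
  then show ?case by simp
qed

lemma pow_var_J:
  fixes C :: "('v::finite) set"
  shows "(ideal_pow (var_ideal C) d :: ('v, 'k::comm_ring_1) mpoly set) \<subseteq> J C d"
  unfolding ideal_pow_def
  using var_ideal_J prod_list_J by (intro ideal_gen_least[OF J_ideal]) fastforce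

lemma symb_char:
  fixes E :: "('v::finite) set set"
  assumes "p \<in> (symbolic_power E d :: ('v, 'k::comm_ring_1) mpoly set)" "m \<in> Poly_Mapping.keys p"
    "minimal_vertex_cover E C"
  shows "d \<le> wt C m"
proof -
  have "p \<in> ideal_pow (var_ideal C) d" using assms(1,3) unfolding symbolic_power_def by blast
  then show ?thesis using pow_var_J assms(2) unfolding J_def by blast
qed

lemma prod_single: "(\<Prod>e\<in>A. Poly_Mapping.single (f e) (1::'k::comm_ring_1)) = Poly_Mapping.single (sum f A) 1"
proof (induction A rule: infinite_finite_induct)
  case (insert x F) then show ?case by (simp add: mult_single)
qed auto



lemma mono_in:
  fixes E :: "('v::finite) set set" and m :: "'v \<Rightarrow>\<^sub>0 nat"
  assumes sg: "simple_graph E"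
    and cyc: "\<forall>k. odd k \<and> int k \<le> 2 * int s - 3 \<longrightarrow> \<not> has_cycle_of_length E k"
    and wtc: "\<forall>C. minimal_vertex_cover E C \<longrightarrow> s + 1 \<le> wt C m"
  shows "(Poly_Mapping.single m 1 :: ('v, 'k::comm_ring_1) mpoly) \<in> ideal_pow (edge_ideal E) s"
proof -
  define a where "a = Poly_Mapping.lookup m"
  have "\<forall>C. minimal_vertex_cover E C \<longrightarrow> s + 1 \<le> (\<Sum>v\<in>C. a v)"
    using wtc by (simp add: wt_def a_def)
  from comb[OF sg cyc this] obtain M where M: "M \<subseteq> blow E a" "matching M" "card M = s" by blast
  have gb: "graph (blow E a)" using blow_graph[OF sg] .
  have finM: "finite M" using M(1) gb finite_subset unfolding graph_def by blast
  have fin_e: "finite e" if "e \<in> M" for e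
  proof -
    have "card e = 2" using gb M(1) that unfolding graph_def by blast
    then show ?thesis by (intro card_ge_0_finite) simp
  qed
  define mon where "mon e = (\<Sum>x\<in>e. Poly_Mapping.single (fst x) (1::nat))" for e :: "('v \<times> nat) set"
  define g where "g e = (Poly_Mapping.single (mon e) (1::'k) :: ('v, 'k) mpoly)" for e
  have gE: "g e \<in> edge_ideal E" if e: "e \<in> M" for e
  proof -
    obtain u v i j where uv: "e = {(u,i),(v,j)}" "{u,v} \<in> E"
      using e M(1) unfolding blow_def by blast
    have "card {u,v} = 2" using sg uv(2) unfolding simple_graph_def by blast
    then have "u \<noteq> v" by (cases "u = v") auto
    then have nin: "(u,i) \<notin> {(v,j)}" by simp
    have "mon e = Poly_Mapping.single (fst (u,i)) 1 + (\<Sum>x\<in>{(v,j)}. Poly_Mapping.single (fst x) (1::nat))"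
      unfolding mon_def uv(1) by (rule sum.insert[OF _ nin]) simp
    then have me: "mon e = Poly_Mapping.single u 1 + Poly_Mapping.single v 1" by simp
    have ge: "g e = var u * var v" unfolding g_def me var_def mult_single by simp
    have "\<exists>u' v'. g e = var u' * var v' \<and> {u', v'} \<in> E" using ge uv(2) by blast
    then have "g e \<in> {var u * var v | u v. {u, v} \<in> E}" by (simp only: mem_Collect_eq)
    then show ?thesis unfolding edge_ideal_def by (rule subsetD[OF ideal_gen_sub])
  qed
  obtain xs where xs: "set xs = M" "distinct xs" using finite_distinct_list[OF finM] by blast
  define S where "S = sum mon M"
  have "prod g M = prod_list (map g xs)" using prod.distinct_set_conv_list[OF xs(2), of g] xs(1) by simp
  moreover have "prod g M = Poly_Mapping.single S 1" unfolding g_def S_def by (rule prod_single)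
  ultimately have P1: "prod_list (map g xs) = Poly_Mapping.single S 1" by simp
  have "length (map g xs) = s" using distinct_card[OF xs(2)] xs(1) M(3) by simp
  moreover have "set (map g xs) \<subseteq> edge_ideal E" using gE xs by auto
  ultimately have "\<exists>ys. prod_list (map g xs) = prod_list ys \<and> length ys = s \<and> set ys \<subseteq> edge_ideal E"
    by (intro exI[of _ "map g xs"]) simp
  then have "prod_list (map g xs) \<in> {prod_list ys | ys. length ys = s \<and> set ys \<subseteq> edge_ideal E}"
    by (simp only: mem_Collect_eq)
  then have P2: "prod_list (map g xs) \<in> ideal_pow (edge_ideal E) s"
    unfolding ideal_pow_def by (rule subsetD[OF ideal_gen_sub])
  have bound: "Poly_Mapping.lookup S w \<le> a w" for w
  proof -
    have "Poly_Mapping.lookup S w = (\<Sum>e\<in>M. card {x\<in>e. fst x = w})"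
    proof -
      have "Poly_Mapping.lookup (mon e) w = card {x\<in>e. fst x = w}" if "e \<in> M" for e
      proof -
        have fe: "finite e" using that by (rule fin_e)
        have "Poly_Mapping.lookup (mon e) w = (\<Sum>x\<in>e. (1::nat) when fst x = w)"
          unfolding mon_def lookup_sum lookup_single by simp
        also have "\<dots> = (\<Sum>x\<in>{x\<in>e. fst x = w}. (1::nat))"
          using fe by (simp add: when_def sum.inter_filter[symmetric])
        also have "\<dots> = card {x\<in>e. fst x = w}" by simp
        finally show ?thesis .
      qed
      then show ?thesis by (simp add: S_def lookup_sum)
    qed
    also have "\<dots> = card (\<Union>e\<in>M. {x\<in>e. fst x = w})"
    proof (rule card_UN_disjoint[symmetric])
      show "finite M" by fact
      show "\<forall>e\<in>M. finite {x \<in> e. fst x = w}" using fin_e by auto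
      show "\<forall>e\<in>M. \<forall>f\<in>M. e \<noteq> f \<longrightarrow> {x \<in> e. fst x = w} \<inter> {x \<in> f. fst x = w} = {}"
        using M(2) unfolding matching_def by blast
    qed
    also have "\<dots> \<le> card ({w} \<times> {..<a w})"
    proof (rule card_mono)
      show "finite ({w} \<times> {..<a w})" by simp
      show "(\<Union>e\<in>M. {x\<in>e. fst x = w}) \<subseteq> {w} \<times> {..<a w}"
      proof
        fix x assume "x \<in> (\<Union>e\<in>M. {x\<in>e. fst x = w})"
        then obtain e where "e \<in> M" "x \<in> e" "fst x = w" by blast
        then obtain u v i j where "e = {(u,i),(v,j)}" "i < a u" "j < a v"
          using M(1) unfolding blow_def by blast
        then show "x \<in> {w} \<times> {..<a w}" using \<open>x \<in> e\<close> \<open>fst x = w\<close> by auto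
      qed
    qed
    also have "\<dots> = a w" by simp
    finally show ?thesis .
  qed
  define d where "d = Abs_poly_mapping (\<lambda>w. Poly_Mapping.lookup m w - Poly_Mapping.lookup S w)"
  have ld: "Poly_Mapping.lookup d = (\<lambda>w. Poly_Mapping.lookup m w - Poly_Mapping.lookup S w)"
    unfolding d_def by (rule lookup_Abs_poly_mapping) simp
  have md: "m = d + S"
    by (rule poly_mapping_eqI) (use bound in \<open>simp add: lookup_add ld a_def\<close>)
  have "(Poly_Mapping.single m 1 :: ('v, 'k) mpoly) = Poly_Mapping.single d 1 * prod_list (map g xs)"
    by (simp add: P1 md mult_single)
  moreover have "is_ideal (ideal_pow (edge_ideal E) s :: ('v, 'k) mpoly set)"
    unfolding ideal_pow_def by (rule ideal_gen_ideal)
  then have "Poly_Mapping.single d 1 * prod_list (map g xs) \<in> ideal_pow (edge_ideal E) s"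
    using P2 unfolding is_ideal_def by blast
  ultimately show ?thesis by simp
qed

theorem proposition3p7:
  fixes E :: "('v::finite) set set" and s :: nat
  assumes "simple_graph E"
    and "s \<ge> 1"
    and "\<forall>k. odd k \<and> int k \<le> 2 * int s - 3 \<longrightarrow> \<not> has_cycle_of_length E k"
  shows "(symbolic_power E (s + 1) :: ('v, 'k::field) mpoly set) \<subseteq> ideal_pow (edge_ideal E) s"
proof
  fix p :: "('v, 'k) mpoly"
  assume p: "p \<in> symbolic_power E (s + 1)"
  show "p \<in> ideal_pow (edge_ideal E) s"
  proof (rule ideal_monomials)
    show "is_ideal (ideal_pow (edge_ideal E) s :: ('v, 'k) mpoly set)"
      unfolding ideal_pow_def by (rule ideal_gen_ideal)
    show "\<forall>m\<in>Poly_Mapping.keys p. Poly_Mapping.single m 1 \<in> ideal_pow (edge_ideal E) s"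
    proof
      fix m assume m: "m \<in> Poly_Mapping.keys p"
      have "\<forall>C. minimal_vertex_cover E C \<longrightarrow> s + 1 \<le> wt C m"
        using symb_char[OF p m] by blast
      then show "Poly_Mapping.single m 1 \<in> ideal_pow (edge_ideal E) s"
        using mono_in[OF assms(1,3)] by blast
    qed
  qed
qed

end
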